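(* Let $H=(V,\mathcal{E})$ be a hypergraph and let $K(H)$ be the graph on vertex set $V$ in which $uv$ is an edge iff $u \neq v$ and $u,v$ belong to a common hyperedge of $H$. For a set $\mathcal{C}$ of cuts, let $\mathcal{M}(\mathcal{C})$ be the integer linear program with one binary variable $x_e\in\{0,1\}$ for each edge $e$ of $K(H)$, which minimizes $\sum_{e\in E(K(H))} x_e$ subject to (1) $\sum_{u,v\in S,\ uv\in E(K(H))} x_{uv}\ \ge |S|-1$ for every $S\in\mathcal{E}$, and (2) $\sum_{e\in E(C)} x_e \ge r-1$ for every cut $C=(X_1,\dots,X_r)\in\mathcal{C}$, where $E(C)$ is the set of edges $xy$ of $K(H)$ with $x\in X_i$, $y\in X_j$, $i\neq j$. For $S\subseteq V$, let $\mathcal{B}_S=\{(X,S\setminus X): X\subseteq S,\ X\notin\{\emptyset,S\}\}$ and let $\mathcal{P}_S$ be the set of all tuples $(X_1,\dots,X_r)$ with $r\ge 2$, each $X_i$ nonempty, the $X_i$ pairwise disjoint and $\bigcup_{i=1}^r X_i=S$. Let $\mathcal{B}_H=\bigcup_{S\in\mathcal{E}}\mathcal{B}_S$ and $\mathcal{P}_H=\bigcup_{S\in\mathcal{E}}\mathcal{P}_S$. Identify a 0-1 assignment $x$ with the graph on $V$ whose edge set is $\{e : x_e=1\}$. Then the optimal solutions of $\mathcal{M}(\mathcal{P}_H)$ are in one-to-one correspondence with the optimal solutions of $\mathcal{M}(\mathcal{B}_H)$, which are in one-to-one correspondence with the optimal solutions of the Minimum Connectivity Inference instance $H$, i.e.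 graphs $G=(V,E)$ with $G[S]$ connected for every $S\in\mathcal{E}$ and $|E|$ minimum.
   Context: A cut is a tuple $(X_1,\dots,X_r)$ with $r\ge 2$ of nonempty, pairwise disjoint subsets of $V$. The Minimum Connectivity Inference (MCI) problem: given a hypergraph $H=(V,\mathcal{E})$, find a graph $G=(V,E)$ such that the induced subgraph $G[S]$ is connected for every hyperedge $S\in\mathcal{E}$ (a feasible solution), minimizing $|E|$. *)

theory Defs
  imports Main
begin

text \<open>Vertices have type 'a; an (undirected, simple) edge is a 2-element set of vertices.
A hypergraph is given by a finite vertex set V and a set Es of hyperedges, each a subset of V.\<close>

definition hypergraph :: "'a set \<Rightarrow> 'a set set \<Rightarrow> bool" where
  "hypergraph V Es \<longleftrightarrow> finite V \<and> (\<forall>S\<in>Es. S \<subseteq> V)"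

definition KH_edges :: "'a set set \<Rightarrow> 'a set set" where
  "KH_edges Es = {{u, v} | u v. u \<noteq> v \<and> (\<exists>S\<in>Es. u \<in> S \<and> v \<in> S)}"

definition is_cut :: "'a set list \<Rightarrow> bool" where
  "is_cut C \<longleftrightarrow> length C \<ge> 2 \<and> (\<forall>i<length C. C ! i \<noteq> {}) \<and>
     (\<forall>i<length C. \<forall>j<length C. i \<noteq> j \<longrightarrow> C ! i \<inter> C ! j = {})"

definition cut_edges :: "'a set set \<Rightarrow> 'a set list \<Rightarrow> 'a set set" where
  "cut_edges Es C = {e \<in> KH_edges Es. \<exists>i<length C. \<exists>j<length C. i \<noteq> j \<and>
       (\<exists>x\<in>C ! i. \<exists>y\<in>C ! j. e = {x, y})}"

definition B_set :: "'a set \<Rightarrow> 'a set list set" where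
  "B_set S = {[X, S - X] | X. X \<subseteq> S \<and> X \<noteq> {} \<and> X \<noteq> S}"

definition P_set :: "'a set \<Rightarrow> 'a set list set" where
  "P_set S = {C. is_cut C \<and> \<Union>(set C) = S}"

definition B_H :: "'a set set \<Rightarrow> 'a set list set" where
  "B_H Es = (\<Union>S\<in>Es. B_set S)"

definition P_H :: "'a set set \<Rightarrow> 'a set list set" where
  "P_H Es = (\<Union>S\<in>Es. P_set S)"

text \<open>0-1 assignments: one variable x_e in {0,1} for each edge e of K(H); the function is
taken to be 0 outside E(K(H)) so that assignments are determined by their values on E(K(H)).\<close>
definition assignment :: "'a set set \<Rightarrow> ('a set \<Rightarrow> int) \<Rightarrow> bool" where
  "assignment Es x \<longleftrightarrow> (\<forall>e\<in>KH_edges Es. x e \<in> {0, 1}) \<and> (\<forall>e. e \<notin> KH_edges Es \<longrightarrow> x e = 0)"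

definition ilp_cost :: "'a set set \<Rightarrow> ('a set \<Rightarrow> int) \<Rightarrow> int" where
  "ilp_cost Es x = (\<Sum>e\<in>KH_edges Es. x e)"

definition ilp_feasible :: "'a set set \<Rightarrow> 'a set list set \<Rightarrow> ('a set \<Rightarrow> int) \<Rightarrow> bool" where
  "ilp_feasible Es Cs x \<longleftrightarrow> assignment Es x \<and>
     (\<forall>S\<in>Es. (\<Sum>e\<in>{e \<in> KH_edges Es. e \<subseteq> S}. x e) \<ge> int (card S) - 1) \<and>
     (\<forall>C\<in>Cs. (\<Sum>e\<in>cut_edges Es C. x e) \<ge> int (length C) - 1)"

definition ilp_optimal :: "'a set set \<Rightarrow> 'a set list set \<Rightarrow> ('a set \<Rightarrow> int) \<Rightarrow> bool" where
  "ilp_optimal Es Cs x \<longleftrightarrow> ilp_feasible Es Cs x \<and>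
     (\<forall>y. ilp_feasible Es Cs y \<longrightarrow> ilp_cost Es x \<le> ilp_cost Es y)"

definition is_graph :: "'a set \<Rightarrow> 'a set set \<Rightarrow> bool" where
  "is_graph V E \<longleftrightarrow> (\<forall>e\<in>E. e \<subseteq> V \<and> card e = 2)"

definition induced_connected :: "'a set set \<Rightarrow> 'a set \<Rightarrow> bool" where
  "induced_connected E S \<longleftrightarrow>
     (\<forall>u\<in>S. \<forall>v\<in>S. (u, v) \<in> {(a, b). a \<in> S \<and> b \<in> S \<and> {a, b} \<in> E}\<^sup>*)"

definition mci_feasible :: "'a set \<Rightarrow> 'a set set \<Rightarrow> 'a set set \<Rightarrow> bool" where
  "mci_feasible V Es E \<longleftrightarrow> is_graph V E \<and> (\<forall>S\<in>Es. induced_connected E S)"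

definition mci_optimal :: "'a set \<Rightarrow> 'a set set \<Rightarrow> 'a set set \<Rightarrow> bool" where
  "mci_optimal V Es E \<longleftrightarrow> mci_feasible V Es E \<and>
     (\<forall>E'. mci_feasible V Es E' \<longrightarrow> card E \<le> card E')"

definition graph_of :: "'a set set \<Rightarrow> ('a set \<Rightarrow> int) \<Rightarrow> 'a set set" where
  "graph_of Es x = {e \<in> KH_edges Es. x e = 1}"

end

theory Submission
  imports Defs
begin


lemma crossing_count:
  fixes F :: "'a set set" and P :: "'i \<Rightarrow> 'a set" and I :: "'i set"
  assumes finI: "finite I" and finF: "finite F"
    and disj: "\<And>i j. i \<in> I \<Longrightarrow> j \<in> I \<Longrightarrow> i \<noteq> j \<Longrightarrow> P i \<inter> P j = {}"
    and ne: "\<And>i. i \<in> I \<Longrightarrow> P i \<noteq> {}"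
    and cover: "(\<Union>i\<in>I. P i) = S"
    and conn: "\<And>u v. u \<in> S \<Longrightarrow> v \<in> S \<Longrightarrow> (u,v) \<in> {(a,b). a \<in> S \<and> b \<in> S \<and> {a,b} \<in> F}\<^sup>*"
  shows "card I \<le> card {e\<in>F. \<exists>i\<in>I. \<exists>j\<in>I. i \<noteq> j \<and> (\<exists>x\<in>P i. \<exists>y\<in>P j. e = {x,y})} + 1"
proof (cases "I = {}")
  case True thus ?thesis by simp
next
  case False
  then obtain i0 where i0: "i0 \<in> I" by blast
  then obtain w0 where w0: "w0 \<in> P i0" using ne by blast
  have w0S: "w0 \<in> S" using cover i0 w0 by blast
  define R where "R = {(a,b). a \<in> S \<and> b \<in> S \<and> {a,b} \<in> F}"
  define d where "d v = (LEAST n. (v,w0) \<in> R ^^ n)" for v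
  have dI: "(v,w0) \<in> R ^^ d v" if "v \<in> S" for v
  proof -
    have "(v,w0) \<in> R\<^sup>*" using conn[OF that w0S] unfolding R_def .
    then obtain n where "(v,w0) \<in> R ^^ n" using rtrancl_imp_relpow by blast
    thus ?thesis unfolding d_def by (rule LeastI)
  qed
  have dle: "d v \<le> n" if "(v,w0) \<in> R ^^ n" for v n unfolding d_def using that by (rule Least_le)
  have step: "\<exists>u. (v,u) \<in> R \<and> d u < d v" if vS: "v \<in> S" and vw: "v \<noteq> w0" for v
  proof -
    have "d v \<noteq> 0" using dI[OF vS] vw by (metis relpow_0_E)
    then obtain k where k: "d v = Suc k" using not0_implies_Suc by blast
    then obtain y where "(v,y) \<in> R" "(y,w0) \<in> R ^^ k" using dI[OF vS] relpow_Suc_D2 by metis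
    thus ?thesis using dle k by force
  qed
  have "\<forall>i\<in>I. \<exists>v. v \<in> P i \<and> (\<forall>v'. v' \<in> P i \<longrightarrow> d v \<le> d v')"
  proof
    fix i assume "i \<in> I"
    then obtain v0 where "v0 \<in> P i" using ne by blast
    thus "\<exists>v. v \<in> P i \<and> (\<forall>v'. v' \<in> P i \<longrightarrow> d v \<le> d v')" by (rule ex_has_least_nat)
  qed
  then obtain vf where vf: "\<And>i. i \<in> I \<Longrightarrow> vf i \<in> P i \<and> (\<forall>v'. v' \<in> P i \<longrightarrow> d (vf i) \<le> d v')"
    by metis
  have vfS: "vf i \<in> S" if "i \<in> I" for i using vf[OF that] cover that by blast
  have vfw: "vf i \<noteq> w0" if "i \<in> I" "i \<noteq> i0" for i using vf[OF that(1)] disj[OF that(1) i0 that(2)] w0 by blast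
  have "\<forall>i\<in>I-{i0}. \<exists>u. (vf i,u) \<in> R \<and> d u < d (vf i)" using step vfS vfw by blast
  then obtain uf where uf: "\<And>i. i \<in> I - {i0} \<Longrightarrow> (vf i, uf i) \<in> R \<and> d (uf i) < d (vf i)" by metis
  define D where "D = {e\<in>F. \<exists>i\<in>I. \<exists>j\<in>I. i \<noteq> j \<and> (\<exists>x\<in>P i. \<exists>y\<in>P j. e = {x,y})}"
  define f where "f i = {vf i, uf i}" for i
  have img: "f ` (I - {i0}) \<subseteq> D"
  proof
    fix e assume "e \<in> f ` (I - {i0})"
    then obtain i where i: "i \<in> I - {i0}" "e = f i" by blast
    have R1: "(vf i, uf i) \<in> R" "d (uf i) < d (vf i)" using uf[OF i(1)] by auto
    hence "uf i \<in> S" "{vf i, uf i} \<in> F" unfolding R_def by auto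
    then obtain j where j: "j \<in> I" "uf i \<in> P j" using cover by blast
    have "j \<noteq> i" using vf[of i] i R1(2) j by force
    have "vf i \<in> P i" "i \<in> I" using vf[of i] i by auto
    moreover have "e = {vf i, uf i}" using i(2) f_def by simp
    ultimately show "e \<in> D"
    proof -
      have "\<exists>x\<in>P i. \<exists>y\<in>P j. e = {x,y}" using \<open>e = {vf i, uf i}\<close> \<open>vf i \<in> P i\<close> j(2) by auto
      hence "i \<noteq> j \<and> (\<exists>x\<in>P i. \<exists>y\<in>P j. e = {x,y})" using \<open>j \<noteq> i\<close> by simp
      hence "\<exists>j'\<in>I. i \<noteq> j' \<and> (\<exists>x\<in>P i. \<exists>y\<in>P j'. e = {x,y})" using j(1) by (rule bexI)
      hence "\<exists>i'\<in>I. \<exists>j'\<in>I. i' \<noteq> j' \<and> (\<exists>x\<in>P i'. \<exists>y\<in>P j'. e = {x,y})"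
        using \<open>i \<in> I\<close> by (rule bexI)
      moreover have "e \<in> F" using \<open>{vf i, uf i} \<in> F\<close> \<open>e = {vf i, uf i}\<close> by simp
      ultimately show ?thesis unfolding D_def by (intro CollectI conjI)
    qed
  qed
  have inj: "inj_on f (I - {i0})"
  proof (rule inj_onI, rule ccontr)
    fix i j assume i: "i \<in> I - {i0}" and j: "j \<in> I - {i0}" and fe: "f i = f j" and ne: "i \<noteq> j"
    have "vf i \<noteq> vf j" using vf[of i] vf[of j] disj[of i j] i j ne by auto
    hence "vf i = uf j \<and> uf i = vf j" using fe unfolding f_def doubleton_eq_iff by simp
    thus False using uf[OF i] uf[OF j] by simp
  qed
  have "finite D" unfolding D_def using finF by simp
  hence "card (I - {i0}) \<le> card D" using card_inj_on_le[OF inj img] by simp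
  thus ?thesis unfolding D_def using card_Diff_singleton[OF i0] finI False by (simp add: card_gt_0_iff)

qed



lemma KH_sub: "hypergraph V Es \<Longrightarrow> KH_edges Es \<subseteq> Pow V"
  by (auto simp: KH_edges_def hypergraph_def)

lemma KH_fin: "hypergraph V Es \<Longrightarrow> finite (KH_edges Es)"
  using KH_sub by (metis finite_Pow_iff hypergraph_def finite_subset)

lemma KH_card: "e \<in> KH_edges Es \<Longrightarrow> card e = 2"
  by (auto simp: KH_edges_def)

lemma graph_of_sub: "graph_of Es x \<subseteq> KH_edges Es"
  by (auto simp: graph_of_def)

lemma sum_card:
  assumes "assignment Es x" "A \<subseteq> KH_edges Es" "finite A"
  shows "(\<Sum>e\<in>A. x e) = int (card (A \<inter> graph_of Es x))"
proof -
  have "(\<Sum>e\<in>A. x e) = (\<Sum>e\<in>A. if e \<in> graph_of Es x then 1 else 0)"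
  proof (rule sum.cong)
    fix e assume "e \<in> A"
    hence "e \<in> KH_edges Es" using assms(2) by blast
    thus "x e = (if e \<in> graph_of Es x then 1 else 0)"
      using assms(1) by (auto simp: assignment_def graph_of_def)
  qed simp
  also have "\<dots> = int (card (A \<inter> graph_of Es x))"
    using assms(3) by (simp add: sum.If_cases)
  finally show ?thesis .
qed

lemma B_sub_P: "B_H Es \<subseteq> P_H Es"
proof
  fix C assume "C \<in> B_H Es"
  then obtain S X where S: "S \<in> Es" "C = [X, S - X]" "X \<subseteq> S" "X \<noteq> {}" "X \<noteq> S"
    unfolding B_H_def B_set_def by blast
  have "is_cut C" unfolding is_cut_def using S
    by (auto simp: less_Suc_eq nth_Cons')
  moreover have "\<Union>(set C) = S" using S by auto
  ultimately show "C \<in> P_H Es" unfolding P_H_def P_set_def using S(1) by blast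
qed

lemma conn_imp_P:
  assumes hyp: "hypergraph V Es" and asg: "assignment Es x"
    and conn: "\<forall>S\<in>Es. induced_connected (graph_of Es x) S"
  shows "ilp_feasible Es (P_H Es) x"
proof -
  define G where "G = graph_of Es x"
  have finKH: "finite (KH_edges Es)" using KH_fin[OF hyp] .
  have finG: "finite G" using finKH graph_of_sub G_def finite_subset by metis
  have c1: "(\<Sum>e\<in>{e \<in> KH_edges Es. e \<subseteq> S}. x e) \<ge> int (card S) - 1" if S: "S \<in> Es" for S
  proof -
    have finS: "finite S" using hyp S unfolding hypergraph_def by (meson finite_subset)
    have "card S \<le> card {e\<in>G. \<exists>i\<in>S. \<exists>j\<in>S. i \<noteq> j \<and> (\<exists>x\<in>{i}. \<exists>y\<in>{j}. e = {x,y})} + 1"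
      by (rule crossing_count[where S = S]) (use finS finG conn S in \<open>auto simp: G_def induced_connected_def\<close>)
    also have "{e\<in>G. \<exists>i\<in>S. \<exists>j\<in>S. i \<noteq> j \<and> (\<exists>x\<in>{i}. \<exists>y\<in>{j}. e = {x,y})}
        \<subseteq> {e \<in> KH_edges Es. e \<subseteq> S} \<inter> graph_of Es x"
      using graph_of_sub G_def by auto
    hence "card {e\<in>G. \<exists>i\<in>S. \<exists>j\<in>S. i \<noteq> j \<and> (\<exists>x\<in>{i}. \<exists>y\<in>{j}. e = {x,y})}
        \<le> card ({e \<in> KH_edges Es. e \<subseteq> S} \<inter> graph_of Es x)"
      by (rule card_mono[rotated]) (use finKH in auto)
    finally show ?thesis using sum_card[OF asg, of "{e \<in> KH_edges Es. e \<subseteq> S}"] finKH by simp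
  qed
  have c2: "(\<Sum>e\<in>cut_edges Es C. x e) \<ge> int (length C) - 1" if C: "C \<in> P_H Es" for C
  proof -
    obtain S where S: "S \<in> Es" "is_cut C" "\<Union>(set C) = S" using C unfolding P_H_def P_set_def by blast
    have "card {0..<length C} \<le> card {e\<in>G. \<exists>i\<in>{0..<length C}. \<exists>j\<in>{0..<length C}. i \<noteq> j \<and> (\<exists>x\<in>C!i. \<exists>y\<in>C!j. e = {x,y})} + 1"
    proof (rule crossing_count[where S = S])
      show "(\<Union>i\<in>{0..<length C}. C ! i) = S" using S(3) by (auto simp: set_conv_nth) blast
    qed (use finG conn S in \<open>auto simp: G_def induced_connected_def is_cut_def\<close>)
    also have "{e\<in>G. \<exists>i\<in>{0..<length C}. \<exists>j\<in>{0..<length C}. i \<noteq> j \<and> (\<exists>x\<in>C!i. \<exists>y\<in>C!j. e = {x,y})}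
        \<subseteq> cut_edges Es C \<inter> graph_of Es x"
      using graph_of_sub G_def unfolding cut_edges_def by auto blast
    hence "card {e\<in>G. \<exists>i\<in>{0..<length C}. \<exists>j\<in>{0..<length C}. i \<noteq> j \<and> (\<exists>x\<in>C!i. \<exists>y\<in>C!j. e = {x,y})}
        \<le> card (cut_edges Es C \<inter> graph_of Es x)"
      by (rule card_mono[rotated]) (use finKH in \<open>auto simp: cut_edges_def\<close>)
    finally show ?thesis using sum_card[OF asg, of "cut_edges Es C"] finKH
      by (simp add: cut_edges_def)
  qed
  show ?thesis unfolding ilp_feasible_def using asg c1 c2 by blast
qed



lemma B_imp_conn:
  assumes asg: "assignment Es x" and feas: "ilp_feasible Es (B_H Es) x" and S: "S \<in> Es"
  shows "induced_connected (graph_of Es x) S"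
  unfolding induced_connected_def
proof (intro ballI, rule ccontr)
  fix u v assume u: "u \<in> S" and v: "v \<in> S"
  define R where "R = {(a, b). a \<in> S \<and> b \<in> S \<and> {a, b} \<in> graph_of Es x}"
  assume nc: "(u, v) \<notin> {(a, b). a \<in> S \<and> b \<in> S \<and> {a, b} \<in> graph_of Es x}\<^sup>*"
  define X where "X = {w \<in> S. (u, w) \<in> R\<^sup>*}"
  have "u \<in> X" using u X_def by simp
  moreover have "v \<notin> X" using nc X_def R_def by simp
  ultimately have C: "[X, S - X] \<in> B_H Es" unfolding B_H_def B_set_def using S v X_def by blast
  hence "(\<Sum>e\<in>cut_edges Es [X, S - X]. x e) \<ge> 1" using feas unfolding ilp_feasible_def by force
  hence "\<exists>e\<in>cut_edges Es [X, S - X]. x e \<noteq> 0" by (metis order.strict_iff_not sum.neutral zero_less_one)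
  then obtain e where e: "e \<in> cut_edges Es [X, S - X]" "x e \<noteq> 0" by blast
  hence "e \<in> graph_of Es x" using asg unfolding assignment_def graph_of_def cut_edges_def by auto
  obtain a b where ab: "e = {a, b}" "a \<in> X" "b \<in> S - X"
    using e(1) unfolding cut_edges_def by (auto simp: less_Suc_eq) (metis insert_commute)
  have "(u, b) \<in> R\<^sup>*"
  proof (rule rtrancl_into_rtrancl)
    show "(u, a) \<in> R\<^sup>*" using ab X_def by simp
    show "(a, b) \<in> R" using ab \<open>e \<in> graph_of Es x\<close> X_def R_def by auto
  qed
  thus False using ab X_def by auto
qed

lemma feas_iff:
  assumes hyp: "hypergraph V Es"
  shows "ilp_feasible Es (P_H Es) x = ilp_feasible Es (B_H Es) x"
    and "ilp_feasible Es (B_H Es) x = (assignment Es x \<and> (\<forall>S\<in>Es. induced_connected (graph_of Es x) S))"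
proof -
  have mono: "ilp_feasible Es (P_H Es) x \<Longrightarrow> ilp_feasible Es (B_H Es) x"
    using B_sub_P unfolding ilp_feasible_def by blast
  have 2: "ilp_feasible Es (B_H Es) x = (assignment Es x \<and> (\<forall>S\<in>Es. induced_connected (graph_of Es x) S))"
  proof
    assume f: "ilp_feasible Es (B_H Es) x"
    hence "assignment Es x" unfolding ilp_feasible_def by blast
    thus "assignment Es x \<and> (\<forall>S\<in>Es. induced_connected (graph_of Es x) S)"
      using B_imp_conn f by blast
  next
    assume "assignment Es x \<and> (\<forall>S\<in>Es. induced_connected (graph_of Es x) S)"
    thus "ilp_feasible Es (B_H Es) x" using conn_imp_P[OF hyp] mono by blast
  qed
  show "ilp_feasible Es (B_H Es) x = (assignment Es x \<and> (\<forall>S\<in>Es. induced_connected (graph_of Es x) S))"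
    by (rule 2)
  show "ilp_feasible Es (P_H Es) x = ilp_feasible Es (B_H Es) x"
    using 2 mono conn_imp_P[OF hyp] by blast
qed



lemma restrict_rel:
  assumes "is_graph V E" "S \<in> Es"
  shows "{(a, b). a \<in> S \<and> b \<in> S \<and> {a, b} \<in> E \<inter> KH_edges Es} = {(a, b). a \<in> S \<and> b \<in> S \<and> {a, b} \<in> E}"
proof -
  have "{a, b} \<in> KH_edges Es" if "a \<in> S" "b \<in> S" "{a, b} \<in> E" for a b
  proof -
    have "card {a, b} = 2" using assms(1) that(3) unfolding is_graph_def by blast
    hence "a \<noteq> b" by auto
    thus ?thesis unfolding KH_edges_def using that assms(2) by blast
  qed
  thus ?thesis by auto
qed

lemma mci_restrict:
  assumes "mci_feasible V Es E"
  shows "mci_feasible V Es (E \<inter> KH_edges Es)"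
  using assms restrict_rel[of V E] unfolding mci_feasible_def is_graph_def induced_connected_def
  by (metis (no_types, lifting) Int_iff)

lemma mci_fin: "hypergraph V Es \<Longrightarrow> mci_feasible V Es E \<Longrightarrow> finite E"
  unfolding mci_feasible_def is_graph_def hypergraph_def
  by (metis PowI finite_Pow_iff finite_subset subsetI)

lemma cost_card: "hypergraph V Es \<Longrightarrow> assignment Es x \<Longrightarrow> ilp_cost Es x = int (card (graph_of Es x))"
  unfolding ilp_cost_def using sum_card[of Es x "KH_edges Es"] KH_fin graph_of_sub
  by (metis Int_absorb1 order_refl)

lemma graph_feas:
  assumes "hypergraph V Es"
  shows "mci_feasible V Es (graph_of Es x) = (\<forall>S\<in>Es. induced_connected (graph_of Es x) S)"
proof -
  have "is_graph V (graph_of Es x)" unfolding is_graph_def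
    using graph_of_sub KH_sub[OF assms] KH_card by blast
  thus ?thesis unfolding mci_feasible_def by simp
qed

theorem proposition1:
  fixes V :: "'a set" and Es :: "'a set set"
  assumes "hypergraph V Es"
  shows "{x. ilp_optimal Es (P_H Es) x} = {x. ilp_optimal Es (B_H Es) x}
    \<and> bij_betw (graph_of Es) {x. ilp_optimal Es (B_H Es) x} {E. mci_optimal V Es E}"
proof
  note hyp = assms
  show "{x. ilp_optimal Es (P_H Es) x} = {x. ilp_optimal Es (B_H Es) x}"
    unfolding ilp_optimal_def feas_iff(1)[OF hyp] by simp
  define ind where "ind E = (\<lambda>e. if e \<in> E \<inter> KH_edges Es then 1 else (0::int))" for E
  have ind_asg: "assignment Es (ind E)" for E unfolding assignment_def ind_def by auto
  have ind_g: "graph_of Es (ind E) = E \<inter> KH_edges Es" for E unfolding graph_of_def ind_def by auto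
  have feasB: "ilp_feasible Es (B_H Es) x \<longleftrightarrow> assignment Es x \<and> mci_feasible V Es (graph_of Es x)" for x
    using feas_iff(2)[OF hyp] graph_feas[OF hyp] by blast
  have inj: "inj_on (graph_of Es) {x. ilp_optimal Es (B_H Es) x}"
  proof (rule inj_onI)
    fix x y assume "x \<in> {x. ilp_optimal Es (B_H Es) x}" "y \<in> {x. ilp_optimal Es (B_H Es) x}"
      and g: "graph_of Es x = graph_of Es y"
    hence ax: "assignment Es x" and ay: "assignment Es y" unfolding ilp_optimal_def ilp_feasible_def by auto
    show "x = y"
    proof
      fix e show "x e = y e"
      proof (cases "e \<in> KH_edges Es")
        case True
        hence "x e = 1 \<longleftrightarrow> y e = 1" using g unfolding graph_of_def by blast
        moreover have "x e \<in> {0,1}" "y e \<in> {0,1}" using ax ay True unfolding assignment_def by auto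
        ultimately show ?thesis by auto
      next
        case False thus ?thesis using ax ay unfolding assignment_def by auto
      qed
    qed
  qed
  have img1: "graph_of Es x \<in> {E. mci_optimal V Es E}" if x: "ilp_optimal Es (B_H Es) x" for x
  proof -
    have fx: "assignment Es x" "mci_feasible V Es (graph_of Es x)" using x feasB unfolding ilp_optimal_def by auto
    have "card (graph_of Es x) \<le> card E'" if E': "mci_feasible V Es E'" for E'
    proof -
      have f': "mci_feasible V Es (E' \<inter> KH_edges Es)" by (rule mci_restrict[OF E'])
      have "ilp_feasible Es (B_H Es) (ind (E' \<inter> KH_edges Es))" using feasB ind_asg ind_g f' by simp
      hence "ilp_cost Es x \<le> ilp_cost Es (ind (E' \<inter> KH_edges Es))" using x unfolding ilp_optimal_def by blast
      hence "card (graph_of Es x) \<le> card (E' \<inter> KH_edges Es)"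
        using cost_card[OF hyp] fx(1) ind_asg ind_g by simp
      also have "\<dots> \<le> card E'" using mci_fin[OF hyp E'] by (simp add: card_mono)
      finally show ?thesis .
    qed
    thus ?thesis using fx unfolding mci_optimal_def by blast
  qed
  have img2: "E \<in> graph_of Es ` {x. ilp_optimal Es (B_H Es) x}" if E: "mci_optimal V Es E" for E
  proof -
    have fE: "mci_feasible V Es E" using E unfolding mci_optimal_def by blast
    have sub: "E \<subseteq> KH_edges Es"
    proof (rule ccontr)
      assume "\<not> E \<subseteq> KH_edges Es"
      hence "E \<inter> KH_edges Es \<subset> E" by blast
      hence "card (E \<inter> KH_edges Es) < card E" using mci_fin[OF hyp fE] by (simp add: psubset_card_mono)
      moreover have "card E \<le> card (E \<inter> KH_edges Es)" using E mci_restrict[OF fE] unfolding mci_optimal_def by blast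
      ultimately show False by simp
    qed
    have gE: "graph_of Es (ind E) = E" using ind_g sub by blast
    have "ilp_optimal Es (B_H Es) (ind E)"
      unfolding ilp_optimal_def
    proof (intro conjI allI impI)
      show "ilp_feasible Es (B_H Es) (ind E)" using feasB ind_asg gE fE by simp
      fix y assume "ilp_feasible Es (B_H Es) y"
      hence "assignment Es y" "mci_feasible V Es (graph_of Es y)" using feasB by auto
      hence "card E \<le> card (graph_of Es y)" using E unfolding mci_optimal_def by blast
      thus "ilp_cost Es (ind E) \<le> ilp_cost Es y"
        using cost_card[OF hyp] ind_asg gE \<open>assignment Es y\<close> by simp
    qed
    thus ?thesis using gE by force
  qed
  show "bij_betw (graph_of Es) {x. ilp_optimal Es (B_H Es) x} {E. mci_optimal V Es E}"
    unfolding bij_betw_def using inj img1 img2 by blast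
qed


end
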